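(* Fix $\gamma>-1$. Then for every $f\in C^\infty(\mathbb D_E)$ and $(\beta,a)\in\mathbb S^1\times\mathbb R$, $$I_0^H\big(x^{2+2\gamma}\,(f\circ\Phi)\big)(\beta,a)=\mu_H(a)\,\big(I_0^E(d^\gamma f)\big)(\beta,\tan^{-1}a).$$
   Context: $\mathbb D_E=\mathbb D_H=\{|z|\le1\}$; $\Phi\colon\mathbb D_H\to\mathbb D_E$, $\Phi(z)=\frac{2z}{1+|z|^2}$; $x(z)=\frac{1-|z|^2}{1+|z|^2}$; $d(z)=1-|z|^2$; $\mu_H(a)=(1+a^2)^{-1/2}$. Hyperbolic X-ray transform: $I_0^Hh(\beta,a)=\int_{\mathbb R}h(\gamma_{\beta,a}(t))dt$ with $\gamma_{\beta,a}(t)=e^{i\beta}\frac{(2+ia)\tanh(t/2)+ia}{ia\tanh(t/2)-2+ia}$. Euclidean X-ray transform in fan-beam coordinates: $I_0^Eg(\beta,\alpha)=\int_{-\cos\alpha}^{\cos\alpha}g\big(e^{i(\beta+\alpha+\pi)}(u+i\sin\alpha)\big)du$, $(\beta,\alpha)\in\mathbb S^1\times[-\pi/2,\pi/2]$. *)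

theory Defs
  imports "HOL-Analysis.Analysis"
begin

definition dir_deriv :: "complex \<Rightarrow> (complex \<Rightarrow> 'a::real_normed_vector) \<Rightarrow> complex \<Rightarrow> 'a" where
  "dir_deriv v g z = vector_derivative (\<lambda>t::real. g (z + of_real t * v)) (at 0)"

fun Ck_on :: "nat \<Rightarrow> complex set \<Rightarrow> (complex \<Rightarrow> 'a::real_normed_vector) \<Rightarrow> bool" where
  "Ck_on 0 U g = continuous_on U g"
| "Ck_on (Suc k) U g = ((\<forall>z\<in>U. g differentiable (at z)) \<and>
      Ck_on k U (dir_deriv 1 g) \<and> Ck_on k U (dir_deriv \<i> g))"

definition smooth_on :: "complex set \<Rightarrow> (complex \<Rightarrow> 'a::real_normed_vector) \<Rightarrow> bool" where
  "smooth_on U g \<longleftrightarrow> open U \<and> (\<forall>k. Ck_on k U g)"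

definition smooth_closed_disk :: "(complex \<Rightarrow> 'a::real_normed_vector) \<Rightarrow> bool" where
  "smooth_closed_disk f \<longleftrightarrow> (\<exists>U g. open U \<and> cball 0 1 \<subseteq> U \<and> smooth_on U g \<and>
      (\<forall>z\<in>cball 0 1. g z = f z))"

definition Phi :: "complex \<Rightarrow> complex" where
  "Phi z = 2 * z / complex_of_real (1 + (cmod z)^2)"

definition xH :: "complex \<Rightarrow> real" where
  "xH z = (1 - (cmod z)^2) / (1 + (cmod z)^2)"

definition dE :: "complex \<Rightarrow> real" where
  "dE z = 1 - (cmod z)^2"

definition muH :: "real \<Rightarrow> real" where
  "muH a = 1 / sqrt (1 + a^2)"

definition geod :: "real \<Rightarrow> real \<Rightarrow> real \<Rightarrow> complex" where
  "geod \<beta> a t = exp (\<i> * of_real \<beta>) *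
     (((2 + \<i> * of_real a) * of_real (tanh (t/2)) + \<i> * of_real a) /
      (\<i> * of_real a * of_real (tanh (t/2)) - 2 + \<i> * of_real a))"

definition I0H :: "(complex \<Rightarrow> complex) \<Rightarrow> real \<Rightarrow> real \<Rightarrow> complex" where
  "I0H h \<beta> a = integral UNIV (\<lambda>t. h (geod \<beta> a t))"

definition fanE :: "real \<Rightarrow> real \<Rightarrow> real \<Rightarrow> complex" where
  "fanE \<beta> \<alpha> u = exp (\<i> * of_real (\<beta> + \<alpha> + pi)) * (of_real u + \<i> * of_real (sin \<alpha>))"

definition I0E :: "(complex \<Rightarrow> complex) \<Rightarrow> real \<Rightarrow> real \<Rightarrow> complex" where
  "I0E g \<beta> \<alpha> = integral {- cos \<alpha> .. cos \<alpha>} (\<lambda>u. g (fanE \<beta> \<alpha> u))"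

end

theory Submission
  imports Defs
begin

lemma tanh_half: "tanh ((t::real)/2) = (exp t - 1) / (exp t + 1)"
proof -
  have e: "exp t = exp (t/2) * exp (t/2)" by (simp flip: exp_add)
  have "tanh (t/2) = (exp (t/2) - exp (-(t/2))) / (exp (t/2) + exp (-(t/2)))"
    by (rule tanh_altdef)
  also have "\<dots> = (exp t - 1) / (exp t + 1)"
  proof -
    have *: "(v - 1 / v) / (v + 1 / v) = (v * v - 1) / (v * v + 1)" if "v > 0" for v :: real
      using that by (smt (verit, ccfv_threshold) add_divide_eq_iff diff_divide_eq_iff
    divide_divide_times_eq nonzero_mult_divide_mult_cancel_right2)
    show ?thesis unfolding e exp_minus inverse_eq_divide by (rule *) simp
  qed
  finally show ?thesis .
qed

lemma geod_formula:
  fixes a \<beta> t :: real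
  defines "y \<equiv> exp t"
  shows "geod \<beta> a t = cis \<beta> * (Complex (1 + (a^2-1)*y^2) (-2*a*y^2) / of_real ((y+1)^2 + a^2*y^2))"
proof -
  have y: "y > 0" unfolding y_def by simp
  have R: "(y+1)^2 + a^2*y^2 > 0" using y by (simp add: add_pos_nonneg)
  define \<tau> where "\<tau> = (y - 1)/(y+1)"
  have tau: "tanh (t/2) = \<tau>" unfolding \<tau>_def y_def by (rule tanh_half)
  have D: "\<i> * of_real a * of_real \<tau> - 2 + \<i> * of_real a \<noteq> 0"
    by (simp add: complex_eq_iff)
  have "((2 + \<i> * of_real a) * of_real \<tau> + \<i> * of_real a) /
      (\<i> * of_real a * of_real \<tau> - 2 + \<i> * of_real a) = 
     Complex (1 + (a^2-1)*y^2) (-2*a*y^2) / of_real ((y+1)^2 + a^2*y^2)"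
    apply (subst frac_eq_eq)
    using D R apply (auto simp: complex_eq_iff)[2]
    using y apply (simp add: complex_eq_iff \<tau>_def field_simps)
    apply (auto simp: algebra_simps power2_eq_square)
    done
  then show ?thesis unfolding geod_def tau by (simp add: cis_conv_exp mult.commute)
qed

lemma Complex_div_real: "Complex x y / complex_of_real r = Complex (x/r) (y/r)"
  by (simp add: complex_eq_iff)

lemma cmod_cis_mult2: "(cmod (cis b * Complex x y))^2 = x^2 + y^2"
  by (simp add: norm_mult cmod_power2)

lemma geod_formula2:
  fixes a \<beta> t :: real
  defines "y \<equiv> exp t"
  shows "geod \<beta> a t = cis \<beta> * Complex ((1 + (a^2-1)*y^2) / ((y+1)^2 + a^2*y^2)) ((-2*a*y^2) / ((y+1)^2 + a^2*y^2))"
  unfolding geod_formula Complex_div_real y_def ..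

lemma sq_div_sum: "(A/R)^2 + (B/R)^2 = (A^2 + B^2) / (R::real)^2"
  by (simp add: power_divide add_divide_distrib)

lemma geod_norm2:
  fixes a \<beta> t :: real
  defines "y \<equiv> exp t"
  shows "(cmod (geod \<beta> a t))^2 = ((y-1)^2 + a^2*y^2) / ((y+1)^2 + a^2*y^2)"
proof -
  have y: "y > 0" unfolding y_def by simp
  have R: "(y+1)^2 + a^2*y^2 > 0" using y by (simp add: add_pos_nonneg)
  have k: "(1 + (a^2-1)*y^2)^2 + (-2*a*y^2)^2 = ((y-1)^2 + a^2*y^2) * ((y+1)^2 + a^2*y^2)"
    by algebra
  have "((1 + (a^2-1)*y^2) / ((y+1)^2 + a^2*y^2))^2 + ((-2*a*y^2) / ((y+1)^2 + a^2*y^2))^2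
     = ((1 + (a^2-1)*y^2)^2 + (-2*a*y^2)^2) / ((y+1)^2 + a^2*y^2)^2"
    by (rule sq_div_sum)
  also have "\<dots> = ((y-1)^2 + a^2*y^2) / ((y+1)^2 + a^2*y^2)"
    unfolding k using R by (simp add: power2_eq_square)
  finally show ?thesis unfolding geod_formula2 cmod_cis_mult2 y_def[symmetric] .
qed

lemma xH_geod:
  fixes a \<beta> t :: real
  defines "y \<equiv> exp t"
  shows "xH (geod \<beta> a t) = 2*y / (1 + (1+a^2)*y^2)"
proof -
  have y: "y > 0" unfolding y_def by simp
  have R: "(y+1)^2 + a^2*y^2 > 0" using y by (simp add: add_pos_nonneg)
  have g: "(1 - Q/R)/(1 + Q/R) = (R-Q)/(R+Q)" if "R > 0" for Q R :: real
  proof -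
    have "1 - Q/R = (R-Q)/R" "1 + Q/R = (R+Q)/R" using that by (simp_all add: field_simps)
    then show ?thesis using that by simp
  qed
  have e1: "((y+1)^2 + a^2*y^2) - ((y-1)^2 + a^2*y^2) = 4*y"
    and e2: "((y+1)^2 + a^2*y^2) + ((y-1)^2 + a^2*y^2) = 2 * (1 + (1+a^2)*y^2)"
    by (simp_all add: algebra_simps power2_eq_square)
  have S: "1 + (1+a^2)*y^2 > 0" using y by (simp add: add_pos_nonneg)
  have e3: "4*y / (2 * (1 + (1+a^2)*y^2)) = 2*y / (1 + (1+a^2)*y^2)"
    using S by (simp add: field_simps)
  show ?thesis unfolding xH_def geod_norm2 y_def[symmetric] g[OF R] e1 e2 e3 ..
qed

lemma Phi_geod:
  fixes a \<beta> t :: real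
  defines "y \<equiv> exp t"
  shows "Phi (geod \<beta> a t) = cis \<beta> * Complex ((1 + (a^2-1)*y^2) / (1 + (1+a^2)*y^2)) ((-2*a*y^2) / (1 + (1+a^2)*y^2))"
proof -
  have y: "y > 0" unfolding y_def by simp
  have R: "(y+1)^2 + a^2*y^2 > 0" using y by (simp add: add_pos_nonneg)
  have S: "1 + (1+a^2)*y^2 > 0" using y by (simp add: add_pos_nonneg)
  have e: "1 + ((y-1)^2 + a^2*y^2) / ((y+1)^2 + a^2*y^2) = 2 * (1 + (1+a^2)*y^2) / ((y+1)^2 + a^2*y^2)"
    using R by (simp add: field_simps) (simp add: algebra_simps power2_eq_square)
  have "Phi (geod \<beta> a t) = cis \<beta> * (2 * Complex ((1 + (a^2-1)*y^2) / ((y+1)^2 + a^2*y^2)) ((-2*a*y^2) / ((y+1)^2 + a^2*y^2))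
      / complex_of_real (2 * (1 + (1+a^2)*y^2) / ((y+1)^2 + a^2*y^2)))"
    unfolding Phi_def geod_norm2 y_def[symmetric] e
    unfolding geod_formula2 y_def[symmetric] by simp
  also have "\<dots> = cis \<beta> * Complex ((1 + (a^2-1)*y^2) / (1 + (1+a^2)*y^2)) ((-2*a*y^2) / (1 + (1+a^2)*y^2))"
  proof (rule arg_cong[where f="\<lambda>z. cis \<beta> * z"])
    have *: "2 * Complex p q = Complex (2*p) (2*q)" for p q by (simp add: complex_eq_iff)
    show "2 * Complex ((1 + (a^2-1)*y^2) / ((y+1)^2 + a^2*y^2)) ((-2*a*y^2) / ((y+1)^2 + a^2*y^2))
      / complex_of_real (2 * (1 + (1+a^2)*y^2) / ((y+1)^2 + a^2*y^2)) = 
      Complex ((1 + (a^2-1)*y^2) / (1 + (1+a^2)*y^2)) ((-2*a*y^2) / (1 + (1+a^2)*y^2))"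
    proof -
      have d: "2*(X/R)/(2*S/R) = X/S" if "R > 0" "S > 0" for X S R :: real
        using that by (simp add: field_simps)
      show ?thesis unfolding * Complex_div_real d[OF R S] by simp
    qed
  qed
  finally show ?thesis .
qed

lemma fanE_formula:
  "fanE \<beta> \<alpha> u = cis \<beta> * Complex (-(cos \<alpha> * u - sin \<alpha> * sin \<alpha>)) (-(sin \<alpha> * u + cos \<alpha> * sin \<alpha>))"
proof -
  have "fanE \<beta> \<alpha> u = cis \<beta> * (cis (\<alpha> + pi) * Complex u (sin \<alpha>))"
    unfolding fanE_def cis_conv_exp[symmetric] cis_mult[symmetric]
    by (simp add: complex_eq_iff mult.assoc)
  also have "cis (\<alpha> + pi) * Complex u (sin \<alpha>) = Complex (-(cos \<alpha> * u - sin \<alpha> * sin \<alpha>)) (-(sin \<alpha> * u + cos \<alpha> * sin \<alpha>))"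
    by (simp add: complex_eq_iff algebra_simps)
  finally show ?thesis .
qed

lemma cmod_fanE2: "(cmod (fanE \<beta> \<alpha> u))^2 = u^2 + (sin \<alpha>)^2"
proof -
  have "(-(cos \<alpha> * u - sin \<alpha> * sin \<alpha>))^2 + (-(sin \<alpha> * u + cos \<alpha> * sin \<alpha>))^2
      = (u^2 + (sin \<alpha>)^2) * ((sin \<alpha>)^2 + (cos \<alpha>)^2)"
    by algebra
  also have "\<dots> = u^2 + (sin \<alpha>)^2" by simp
  finally show ?thesis unfolding fanE_formula cmod_cis_mult2 .
qed

lemma dE_fanE: "dE (fanE \<beta> \<alpha> u) = (cos \<alpha>)^2 - u^2"
  unfolding dE_def cmod_fanE2 by (simp add: cos_squared_eq)

definition gg :: "real \<Rightarrow> real \<Rightarrow> real" where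
  "gg a t = (1 / sqrt (1 + a^2)) * (((1 + a^2) * (exp t)^2 - 1) / ((1 + a^2) * (exp t)^2 + 1))"

definition hh :: "real \<Rightarrow> real \<Rightarrow> real" where
  "hh a t = (1 / sqrt (1 + a^2)) * (4 * (1 + a^2) * (exp t)^2 / ((1 + a^2) * (exp t)^2 + 1)^2)"

lemma csq: "(1 / sqrt (1 + a^2))^2 = 1 / (1 + a^2)"
  by (simp add: power_divide add_pos_nonneg)

lemma fanE_gg:
  fixes a \<beta> t :: real
  defines "y \<equiv> exp t"
  shows "fanE \<beta> (arctan a) (gg a t) = cis \<beta> * Complex ((1 + (a^2-1)*y^2) / (1 + (1+a^2)*y^2)) ((-2*a*y^2) / (1 + (1+a^2)*y^2))"
proof -
  define m where "m = 1 + a^2"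
  define c where "c = 1 / sqrt m"
  have m: "m > 0" unfolding m_def by (simp add: add_pos_nonneg)
  have c2: "c * c = 1 / m" unfolding c_def using csq[of a] by (simp add: m_def power2_eq_square)
  have "m * y^2 \<ge> 0" using m by simp
  then have S: "m * y^2 + 1 > 0" by linarith
  have co: "cos (arctan a) = c" unfolding c_def m_def by (simp add: cos_arctan)
  have si: "sin (arctan a) = a * c" unfolding c_def m_def by (simp add: sin_arctan)
  have g: "gg a t = c * ((m * y^2 - 1) / (m * y^2 + 1))" unfolding gg_def c_def m_def y_def ..
  define q where "q = (m * y^2 - 1) / (m * y^2 + 1)"
  have e1: "-(c * (c * q) - a * c * (a * c)) = (a^2 - q) / m"
    using c2 m by (simp add: field_simps power2_eq_square)
  have e2: "-(a * c * (c * q) + c * (a * c)) = - a * (q + 1) / m"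
    using c2 m by (simp add: field_simps power2_eq_square)
  have qS: "q * (m*y^2+1) = m*y^2 - 1" unfolding q_def using S by simp
  have Sm: "1 + (1+a^2)*y^2 = m*y^2+1" unfolding m_def by simp
  have "(a^2 - q) * (m*y^2+1) = (1 + (a^2-1)*y^2) * m"
  proof -
    have "(a^2 - q) * (m*y^2+1) = a^2 * (m*y^2+1) - q * (m*y^2+1)" by (simp add: algebra_simps)
    also have "\<dots> = a^2 * (m*y^2+1) - (m*y^2 - 1)" unfolding qS ..
    also have "\<dots> = (1 + (a^2-1)*y^2) * m" unfolding m_def by (simp add: algebra_simps)
    finally show ?thesis .
  qed
  then have e3: "(a^2 - q) / m = (1 + (a^2-1)*y^2) / (1 + (1+a^2)*y^2)"
    unfolding Sm using m S by (simp add: frac_eq_eq)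
  have "(- a * (q + 1)) * (m*y^2+1) = (-2*a*y^2) * m"
  proof -
    have "(- a * (q + 1)) * (m*y^2+1) = - a * (q * (m*y^2+1)) - a * (m*y^2+1)" by (simp add: algebra_simps)
    also have "\<dots> = - a * (m*y^2 - 1) - a * (m*y^2+1)" unfolding qS ..
    also have "\<dots> = (-2*a*y^2) * m" by (simp add: algebra_simps)
    finally show ?thesis .
  qed
  then have e4: "- a * (q + 1) / m = (-2*a*y^2) / (1 + (1+a^2)*y^2)"
    unfolding Sm using m S by (simp add: frac_eq_eq)
  show ?thesis unfolding fanE_formula co si g q_def[symmetric] e1 e2 e3 e4 ..
qed

lemma Phi_geod_fanE: "Phi (geod \<beta> a t) = fanE \<beta> (arctan a) (gg a t)"
  unfolding Phi_geod fanE_gg ..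

lemma gg_deriv: "(gg a has_real_derivative hh a t) (at t)"
proof -
  define m where "m = 1 + a^2"
  define k where "k = 1 / sqrt m"
  have m: "m > 0" unfolding m_def by (simp add: add_pos_nonneg)
  have "m * (exp t)^2 \<ge> 0" using m by simp
  then have S: "m * (exp t)^2 + 1 > 0" by linarith
  have "((\<lambda>t. k * ((m * (exp t)^2 - 1) / (m * (exp t)^2 + 1))) has_real_derivative
     k * (4 * m * (exp t)^2 / (m * (exp t)^2 + 1)^2)) (at t)"
    using S m by (auto intro!: derivative_eq_intros simp: power2_eq_square) (simp add: field_simps)
  moreover have "(\<lambda>t. k * ((m * (exp t)^2 - 1) / (m * (exp t)^2 + 1))) = gg a"
    unfolding gg_def m_def k_def ..
  moreover have "k * (4 * m * (exp t)^2 / (m * (exp t)^2 + 1)^2) = hh a t"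
    unfolding hh_def m_def k_def ..
  ultimately show ?thesis by simp
qed

lemma hh_pos: "hh a t > 0"
proof -
  have m: "1 + a^2 > 0" by (simp add: add_pos_nonneg)
  moreover have "(1 + a^2) * (exp t)^2 \<ge> 0" using m by simp
  then have "(1 + a^2) * (exp t)^2 + 1 > 0" by linarith
  ultimately show ?thesis unfolding hh_def by (intro mult_pos_pos divide_pos_pos) auto
qed

lemma weight_eq:
  assumes "True"
  shows "xH (geod \<beta> a t) powr (2 + 2*\<gamma>) =
     (1 / sqrt (1 + a^2)) * hh a t * (dE (fanE \<beta> (arctan a) (gg a t)) powr \<gamma>)"
proof -
  define m where "m = 1 + a^2"
  define c where "c = 1 / sqrt m"
  define y where "y = exp t"
  have y: "y > 0" unfolding y_def by simp
  have m: "m > 0" unfolding m_def by (simp add: add_pos_nonneg)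
  have c2: "c^2 = 1 / m" unfolding c_def m_def using csq[of a] by simp
  have "m * y^2 \<ge> 0" using m by simp
  then have S: "m * y^2 + 1 > 0" by linarith
  define x where "x = xH (geod \<beta> a t)"
  have x: "x = 2*y / (m*y^2 + 1)" unfolding x_def xH_geod y_def m_def by (simp add: add.commute)
  have xpos: "x > 0" unfolding x using y S by simp
  have co: "cos (arctan a) = c" unfolding c_def m_def by (simp add: cos_arctan)
  have g: "gg a t = c * ((m * y^2 - 1) / (m * y^2 + 1))" unfolding gg_def c_def m_def y_def ..
  have h: "hh a t = c * (4 * m * y^2 / (m * y^2 + 1)^2)" unfolding hh_def c_def m_def y_def ..
  have d: "dE (fanE \<beta> (arctan a) (gg a t)) = x^2"
  proof -
    have "dE (fanE \<beta> (arctan a) (gg a t)) = c^2 * (1 - ((m * y^2 - 1) / (m * y^2 + 1))^2)"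
    proof -
      have *: "c^2 - (c*q)^2 = c^2*(1-q^2)" for q by (simp add: power_mult_distrib right_diff_distrib)
      show ?thesis unfolding dE_fanE co g * ..
    qed
    also have "1 - ((m * y^2 - 1) / (m * y^2 + 1))^2 = 4 * m * y^2 / (m * y^2 + 1)^2"
      using S by (simp add: field_simps) (simp add: algebra_simps power2_eq_square)
    also have "c^2 * (4 * m * y^2 / (m * y^2 + 1)^2) = x^2"
      unfolding c2 x using m S by (simp add: field_simps power2_eq_square)
    finally show ?thesis .
  qed
  have ch: "c * hh a t = x^2"
    unfolding h x using c2 m S by (simp add: field_simps power2_eq_square)
  have "x powr (2 + 2*\<gamma>) = x^2 * (x^2) powr \<gamma>"
    using xpos by (simp add: powr_add powr_powr[symmetric])
  then show ?thesis unfolding d x_def[symmetric] c_def[symmetric] m_def[symmetric] ch[symmetric] by simp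
qed

lemma gg_q_bounds:
  assumes "m > 0" "E > (0::real)"
  shows "-1 < (m*E - 1)/(m*E + 1)" "(m*E - 1)/(m*E + 1) < 1"
proof -
  have p: "m*E + 1 > 0" using assms by (simp add: add_pos_pos)
  show "-1 < (m*E - 1)/(m*E + 1)" using p assms by (simp add: field_simps)
  show "(m*E - 1)/(m*E + 1) < 1" using p by (simp add: field_simps)
qed

lemma gg_inj: "inj (gg a)"
proof (rule injI)
  fix t1 t2 assume eq: "gg a t1 = gg a t2"
  define m where "m = 1 + a^2"
  have m: "m > 0" unfolding m_def by (simp add: add_pos_nonneg)
  have c: "1 / sqrt m \<noteq> 0" using m by simp
  define E1 where "E1 = (exp t1)^2"
  define E2 where "E2 = (exp t2)^2"
  have p1: "m*E1 + 1 > 0" using m unfolding E1_def by (simp add: add_pos_pos)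
  have p2: "m*E2 + 1 > 0" using m unfolding E2_def by (simp add: add_pos_pos)
  from eq have "1 / sqrt m * ((m*E1 - 1)/(m*E1 + 1)) = 1 / sqrt m * ((m*E2 - 1)/(m*E2 + 1))"
    unfolding gg_def m_def[symmetric] E1_def[symmetric] E2_def[symmetric] .
  then have "(m*E1 - 1)/(m*E1 + 1) = (m*E2 - 1)/(m*E2 + 1)" using c by (metis mult_left_cancel)
  then have "(m*E1 - 1)*(m*E2 + 1) = (m*E2 - 1)*(m*E1 + 1)" using p1 p2 by (simp add: frac_eq_eq)
  then have "m * E1 = m * E2" by algebra
  then have "E1 = E2" using m by simp
  then have "exp t1 = exp t2" unfolding E1_def E2_def by (simp add: power2_eq_iff_nonneg)
  then show "t1 = t2" by simp
qed

lemma gg_range: "range (gg a) = {- (1 / sqrt (1 + a^2)) <..< 1 / sqrt (1 + a^2)}"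
proof -
  define m where "m = 1 + a^2"
  define c where "c = 1 / sqrt m"
  have m: "m > 0" unfolding m_def by (simp add: add_pos_nonneg)
  have cpos: "c > 0" unfolding c_def using m by simp
  have g: "gg a t = c * ((m * (exp t)^2 - 1) / (m * (exp t)^2 + 1))" for t
    unfolding gg_def c_def m_def ..
  have "range (gg a) = {-c<..<c}"
  proof
    show "range (gg a) \<subseteq> {-c<..<c}"
    proof
      fix u assume "u \<in> range (gg a)"
      then obtain t where u: "u = gg a t" by auto
      have "exp t ^2 > 0" by simp
      from gg_q_bounds[OF m this] have q: "-1 < (m * (exp t)^2 - 1) / (m * (exp t)^2 + 1)"
        "(m * (exp t)^2 - 1) / (m * (exp t)^2 + 1) < 1" by auto
      have "c * (-1) < c * ((m * (exp t)^2 - 1) / (m * (exp t)^2 + 1))"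
        using q(1) cpos by (rule mult_strict_left_mono)
      moreover have "c * ((m * (exp t)^2 - 1) / (m * (exp t)^2 + 1)) < c * 1"
        using q(2) cpos by (rule mult_strict_left_mono)
      ultimately show "u \<in> {-c<..<c}" unfolding u g by simp
    qed
  next
    show "{-c<..<c} \<subseteq> range (gg a)"
    proof
      fix u assume u: "u \<in> {-c<..<c}"
      define v where "v = u / c"
      have v: "-1 < v" "v < 1" using u cpos unfolding v_def by (auto simp: field_simps)
      define E where "E = (1+v)/((1-v)*m)"
      have E: "E > 0" unfolding E_def using v m by (simp add: divide_pos_pos)
      define t where "t = ln (sqrt E)"
      have et: "(exp t)^2 = E" unfolding t_def using E by simp
      have mE: "m * E * (1 - v) = 1 + v" unfolding E_def using v m by (simp add: field_simps)
      have p: "m*E + 1 > 0" using m E by (simp add: add_pos_pos)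
      have "m * E - 1 = v * (m * E + 1)" using mE by algebra
      then have "(m*E - 1)/(m*E + 1) = v"
        using p by (simp add: divide_eq_eq)
      then have "gg a t = u" unfolding g et v_def using cpos by simp
      then show "u \<in> range (gg a)" by (metis rangeI)
    qed
  qed
  then show ?thesis unfolding c_def m_def .
qed

lemma weight_integrable:
  fixes c \<gamma> :: real
  assumes c: "c > 0" and g: "\<gamma> > -1"
  shows "(\<lambda>u. (c^2 - u^2) powr \<gamma>) integrable_on {-c..c}"
proof -
  define B where "B = (\<lambda>t::real. t powr \<gamma> * (1 - t) powr \<gamma>)"
  have "B integrable_on {0..1}"
    using integrable_Beta'[of "\<gamma>+1" "\<gamma>+1"] g unfolding B_def by simp
  then obtain I where "(B has_integral I) (cbox 0 1)" by (auto simp: integrable_on_def)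
  from has_integral_affinity'[OF this, of "1/(2*c)" "1/2"] c
  have "(\<lambda>x. B ((1/(2*c)) * x + 1/2)) integrable_on {-c..c}"
    by (auto simp: integrable_on_def)
  from integrable_cmul[OF this, of "(4*c^2) powr \<gamma>"]
  have "(\<lambda>x. (4*c^2) powr \<gamma> * B ((1/(2*c)) * x + 1/2)) integrable_on {-c..c}" by simp
  then show ?thesis
  proof (rule integrable_eq)
    fix x assume x: "x \<in> {-c..c}"
    have e1: "(1/(2*c)) * x + 1/2 = (c + x) / (2*c)" using c by (simp add: field_simps)
    have e2: "1 - ((c + x) / (2*c)) = (c - x) / (2*c)" using c by (simp add: field_simps)
    have e3: "(c + x) / (2*c) * ((c - x) / (2*c)) = (c^2 - x^2) / (4*c^2)"
      using c by (simp add: field_simps power2_eq_square)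
    have pos: "(4*c^2) powr \<gamma> > 0" using c by simp
    show "(4*c^2) powr \<gamma> * B ((1/(2*c)) * x + 1/2) = (c^2 - x^2) powr \<gamma>"
      unfolding B_def e1 e2 powr_mult[symmetric] e3 powr_divide using pos by simp
  qed
qed

theorem theorem3p13:
  fixes \<gamma> :: real and f :: "complex \<Rightarrow> complex" and \<beta> a :: real
  assumes "\<gamma> > -1" and "smooth_closed_disk f"
  shows "(\<lambda>t. complex_of_real (xH (geod \<beta> a t) powr (2 + 2*\<gamma>)) * f (Phi (geod \<beta> a t)))
            integrable_on UNIV
     \<and> (\<lambda>u. complex_of_real (dE (fanE \<beta> (arctan a) u) powr \<gamma>) * f (fanE \<beta> (arctan a) u))
            integrable_on {- cos (arctan a) .. cos (arctan a)}
     \<and> I0H (\<lambda>z. complex_of_real (xH z powr (2 + 2*\<gamma>)) * f (Phi z)) \<beta> a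
        = complex_of_real (muH a) * I0E (\<lambda>z. complex_of_real (dE z powr \<gamma>) * f z) \<beta> (arctan a)"
proof -
  define \<alpha> where "\<alpha> = arctan a"
  define c where "c = 1 / sqrt (1 + a^2)"
  have cpos: "c > 0" unfolding c_def by (simp add: add_pos_nonneg)
  have co: "cos \<alpha> = c" unfolding c_def \<alpha>_def by (simp add: cos_arctan)
  have mu: "muH a = c" unfolding muH_def c_def ..
  from assms(2) obtain U g where U: "open U" "cball 0 1 \<subseteq> U" "smooth_on U g"
    and gf: "\<forall>z\<in>cball 0 1. g z = f z" unfolding smooth_closed_disk_def by blast
  have "Ck_on 0 U g" using U(3) unfolding smooth_on_def by blast
  then have "continuous_on U g" by simp
  then have "continuous_on (cball 0 1) g" using U(2) by (rule continuous_on_subset)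
  then have fc: "continuous_on (cball 0 1) f" by (rule continuous_on_eq) (use gf in auto)
  have "compact (f ` cball 0 1)" by (rule compact_continuous_image[OF fc compact_cball])
  then have "bounded (f ` cball 0 1)" by (rule compact_imp_bounded)
  then obtain M where "\<forall>x\<in>f ` cball 0 1. norm x \<le> M" unfolding bounded_iff by blast
  then have M: "\<forall>z\<in>cball 0 1. norm (f z) \<le> M" by auto
  have inball: "fanE \<beta> \<alpha> u \<in> cball 0 1" if "u \<in> {-c..c}" for u
  proof -
    have "u^2 \<le> c^2" using that by (auto intro!: power2_le_iff_abs_le[THEN iffD2])
    moreover have "c^2 + (sin \<alpha>)^2 = 1" using co sin_cos_squared_add[of \<alpha>] by simp
    ultimately have "(cmod (fanE \<beta> \<alpha> u))^2 \<le> 1^2" unfolding cmod_fanE2 by simp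
    then have "cmod (fanE \<beta> \<alpha> u) \<le> 1" by (rule power2_le_imp_le) simp
    then show ?thesis by simp
  qed
  have dEf: "dE (fanE \<beta> \<alpha> u) = c^2 - u^2" for u unfolding dE_fanE co ..
  define F where "F = (\<lambda>u. complex_of_real (dE (fanE \<beta> \<alpha> u) powr \<gamma>) * f (fanE \<beta> \<alpha> u))"
  have Fabs: "F absolutely_integrable_on {-c<..<c}"
  proof (rule measurable_bounded_by_integrable_imp_absolutely_integrable)
    have "continuous_on {-c<..<c} (\<lambda>u. complex_of_real ((c^2 - u^2) powr \<gamma>) * f (fanE \<beta> \<alpha> u))"
    proof (intro continuous_intros)
      show "\<forall>x\<in>{-c<..<c}. c^2 - x^2 \<noteq> 0"
      proof
        fix x assume "x \<in> {-c<..<c}"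
        then have "(c - x) * (c + x) > 0" by (intro mult_pos_pos) auto
        moreover have "c^2 - x^2 = (c - x) * (c + x)" by (simp add: power2_eq_square algebra_simps)
        ultimately show "c^2 - x^2 \<noteq> 0" by linarith
      qed
      show "continuous_on {-c<..<c} (\<lambda>x. f (fanE \<beta> \<alpha> x))"
      proof (rule continuous_on_compose2[OF fc])
        show "continuous_on {-c<..<c} (fanE \<beta> \<alpha>)" unfolding fanE_def by (intro continuous_intros)
        show "fanE \<beta> \<alpha> ` {-c<..<c} \<subseteq> cball 0 1" using inball by auto
      qed
    qed
    then have "continuous_on {-c<..<c} F" unfolding F_def dEf .
    then show "F \<in> borel_measurable (lebesgue_on {-c<..<c})"
      by (rule continuous_imp_measurable_on_sets_lebesgue) simp
    show "{-c<..<c} \<in> sets lebesgue" by simp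
    have "(\<lambda>u. (c^2 - u^2) powr \<gamma>) integrable_on {-c..c}" by (rule weight_integrable[OF cpos assms(1)])
    then have "(\<lambda>u. M *\<^sub>R (c^2 - u^2) powr \<gamma>) integrable_on {-c..c}" by (rule integrable_cmul)
    then show "(\<lambda>u. M * (c^2 - u^2) powr \<gamma>) integrable_on {-c<..<c}"
      by (simp add: integrable_on_Icc_iff_Ioo)
    fix u assume u: "u \<in> {-c<..<c}"
    then have "norm (f (fanE \<beta> \<alpha> u)) \<le> M" using M inball by auto
    then have "(c^2 - u^2) powr \<gamma> * norm (f (fanE \<beta> \<alpha> u)) \<le> (c^2 - u^2) powr \<gamma> * M"
      by (rule mult_left_mono) simp
    then show "norm (F u) \<le> M * (c^2 - u^2) powr \<gamma>"
      unfolding F_def dEf by (simp add: norm_mult mult.commute)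
  qed
  have CV: "(\<lambda>x. \<bar>hh a x\<bar> *\<^sub>R F (gg a x)) absolutely_integrable_on UNIV \<and>
      integral UNIV (\<lambda>x. \<bar>hh a x\<bar> *\<^sub>R F (gg a x)) = integral {-c<..<c} F"
  proof (rule has_absolute_integral_change_of_variables_real[THEN iffD2])
    show "UNIV \<in> sets lebesgue" by simp
    show "(gg a has_real_derivative hh a x) (at x within UNIV)" for x by (rule gg_deriv)
    show "inj_on (gg a) UNIV" using gg_inj .
    show "F absolutely_integrable_on gg a ` UNIV \<and> integral (gg a ` UNIV) F = integral {-c<..<c} F"
    proof -
      have "gg a ` UNIV = {-c<..<c}" using gg_range[of a] unfolding c_def .
      then show ?thesis using Fabs by simp
    qed
  qed
  have Heq: "complex_of_real (xH (geod \<beta> a t) powr (2 + 2*\<gamma>)) * f (Phi (geod \<beta> a t))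
     = c *\<^sub>R (\<bar>hh a t\<bar> *\<^sub>R F (gg a t))" for t
  proof -
    have ab: "\<bar>hh a t\<bar> = hh a t" using hh_pos[of a t] by simp
    show ?thesis
      unfolding Phi_geod_fanE weight_eq[OF TrueI, where \<gamma>=\<gamma>] F_def c_def[symmetric] \<alpha>_def[symmetric] ab
      by (simp only: scaleR_conv_of_real of_real_mult mult.assoc)
  qed
  have H: "(\<lambda>t. complex_of_real (xH (geod \<beta> a t) powr (2 + 2*\<gamma>)) * f (Phi (geod \<beta> a t)))
      = (\<lambda>t. c *\<^sub>R (\<bar>hh a t\<bar> *\<^sub>R F (gg a t)))"
    using Heq by blast
  have int1: "(\<lambda>t. complex_of_real (xH (geod \<beta> a t) powr (2 + 2*\<gamma>)) * f (Phi (geod \<beta> a t)))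
            integrable_on UNIV"
  proof -
    have "(\<lambda>x. \<bar>hh a x\<bar> *\<^sub>R F (gg a x)) integrable_on UNIV"
      using CV by (simp add: absolutely_integrable_on_def)
    then show ?thesis unfolding H by (rule integrable_cmul)
  qed
  have int2: "F integrable_on {-c..c}"
    using Fabs by (simp add: integrable_on_Icc_iff_Ioo absolutely_integrable_on_def)
  have eq: "I0H (\<lambda>z. complex_of_real (xH z powr (2 + 2*\<gamma>)) * f (Phi z)) \<beta> a
        = complex_of_real c * integral {-c..c} F"
  proof -
    have "I0H (\<lambda>z. complex_of_real (xH z powr (2 + 2*\<gamma>)) * f (Phi z)) \<beta> a
       = integral UNIV (\<lambda>t. complex_of_real (xH (geod \<beta> a t) powr (2 + 2*\<gamma>)) * f (Phi (geod \<beta> a t)))"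
      unfolding I0H_def ..
    also have "\<dots> = c *\<^sub>R integral UNIV (\<lambda>t. \<bar>hh a t\<bar> *\<^sub>R F (gg a t))"
      unfolding H by (rule integral_cmul)
    also have "\<dots> = c *\<^sub>R integral {-c..c} F"
      unfolding CV[THEN conjunct2] integral_open_interval_real ..
    finally show ?thesis by (simp only: scaleR_conv_of_real)
  qed
  have co': "cos (arctan a) = c" using co unfolding \<alpha>_def .
  have Feq: "(\<lambda>u. complex_of_real (dE (fanE \<beta> (arctan a) u) powr \<gamma>) * f (fanE \<beta> (arctan a) u)) = F"
    unfolding F_def \<alpha>_def ..
  have I0: "I0E (\<lambda>z. complex_of_real (dE z powr \<gamma>) * f z) \<beta> (arctan a) = integral {-c..c} F"
    unfolding I0E_def co' Feq ..
  show ?thesis unfolding co' Feq I0 mu using int1 int2 eq by (intro conjI)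
qed
end
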